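(* Let $r$ be a positive integer and let $n\in F_r$. Then $\displaystyle R(n)<\frac{J_r}{r}\,Q_1(n)\,(Q_1(n)-r)$.
   Context: For a positive integer $r$, $S_r$ is the multiplicative arithmetic function with $S_r(p^{\alpha})=0$ if $p\leq r$ and $S_r(p^{\alpha})=p^{\alpha-1}(p-r)$ if $p>r$, for all primes $p$ and positive integers $\alpha$. $B_r=\{n\in\mathbb{N}: S_r(n)>0\}$ (positive integers whose smallest prime factor exceeds $r$, together with $1$). $F_r$ is the set of $n\in B_r$ such that $S_r(n)<S_r(m)$ for all $m\in B_r$ with $m>n$. $R(n)=n\prod_{p\text{ prime},\,p\mid n}p^{-1}$. $Q_1(n)$ is the smallest prime that is larger than $r$ and does not divide $n$. $r\#$ is the product of all primes $\leq r$ (with $1\#=1$). The Jacobsthal function $J(m)$ is the smallest positive integer $a$ such that every set of $a$ consecutive integers contains an element coprime to $m$; $J_r=J(r\#)$. *)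

theory Defs
  imports "HOL-Computational_Algebra.Primes" Complex_Main
begin

definition S :: "nat \<Rightarrow> nat \<Rightarrow> int" where
  "S r n = (\<Prod>p\<in>prime_factors n.
      (if p \<le> r then 0 else int p ^ (multiplicity p n - 1) * (int p - int r)))"

definition B :: "nat \<Rightarrow> nat set" where
  "B r = {n. n > 0 \<and> S r n > 0}"

definition F :: "nat \<Rightarrow> nat set" where
  "F r = {n \<in> B r. \<forall>m \<in> B r. m > n \<longrightarrow> S r n < S r m}"

definition R :: "nat \<Rightarrow> nat" where
  "R n = n div (\<Prod>p\<in>prime_factors n. p)"

definition Q1 :: "nat \<Rightarrow> nat \<Rightarrow> nat" where
  "Q1 r n = (LEAST p. prime p \<and> p > r \<and> \<not> p dvd n)"

definition primorial :: "nat \<Rightarrow> nat" where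
  "primorial r = (\<Prod>p\<in>{p. prime p \<and> p \<le> r}. p)"

definition jacobsthal :: "nat \<Rightarrow> nat" where
  "jacobsthal m = (LEAST a. a > 0 \<and>
      (\<forall>x::int. \<exists>k\<in>{x..<x + int a}. coprime k (int m)))"

definition J :: "nat \<Rightarrow> nat" where
  "J r = jacobsthal (primorial r)"

end

theory Submission
  imports Defs
begin

lemma S_pos_iff:
  assumes "m > 0"
  shows "S r m > 0 \<longleftrightarrow> (\<forall>p\<in>prime_factors m. r < p)"
proof
  assume h: "S r m > 0"
  show "\<forall>p\<in>prime_factors m. r < p"
  proof (rule ccontr)
    assume "\<not> (\<forall>p\<in>prime_factors m. r < p)"
    then obtain p where p: "p \<in> prime_factors m" "p \<le> r" by auto
    have "S r m = 0" unfolding S_def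
      by (rule prod_zero) (use p in auto)
    with h show False by simp
  qed
next
  assume h: "\<forall>p\<in>prime_factors m. r < p"
  show "S r m > 0" unfolding S_def
    by (rule prod_pos) (use h in \<open>auto intro!: mult_pos_pos zero_less_power\<close>)
qed

lemma S_real:
  assumes "m > 0" "\<forall>p\<in>prime_factors m. r < p"
  shows "real_of_int (S r m) = real m * (\<Prod>p\<in>prime_factors m. 1 - real r / real p)"
proof -
  have "real_of_int (S r m) = (\<Prod>p\<in>prime_factors m. real p ^ multiplicity p m * (1 - real r / real p))"
    unfolding S_def of_int_prod
  proof (rule prod.cong[OF refl])
    fix p assume p: "p \<in> prime_factors m"
    then have pr: "prime p" and rp: "r < p" and mu: "multiplicity p m > 0"
      using assms by (auto simp: prime_factors_multiplicity)
    have pp: "real p > 0" using pr prime_gt_0_nat by simp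
    have "real p ^ multiplicity p m = real p ^ (multiplicity p m - 1) * real p"
      using mu by (metis Suc_diff_1 power_Suc2)
    then show "real_of_int (if p \<le> r then 0 else int p ^ (multiplicity p m - 1) * (int p - int r))
      = real p ^ multiplicity p m * (1 - real r / real p)"
      using rp pp by (simp add: field_simps)
  qed
  also have "\<dots> = (\<Prod>p\<in>prime_factors m. real p ^ multiplicity p m) * (\<Prod>p\<in>prime_factors m. 1 - real r / real p)"
    by (rule prod.distrib)
  also have "(\<Prod>p\<in>prime_factors m. real p ^ multiplicity p m) = real m"
  proof -
    have "(\<Prod>p\<in>prime_factors m. p ^ multiplicity p m) = m"
      using prod_prime_factors[of m] assms(1) by simp
    then show ?thesis by (metis (no_types, lifting) of_nat_power of_nat_prod prod.cong)
  qed
  finally show ?thesis .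
qed

lemma jac:
  assumes "M > 0"
  shows "jacobsthal M > 0 \<and> (\<forall>x::int. \<exists>k\<in>{x..<x + int (jacobsthal M)}. coprime k (int M))"
proof -
  have ex: "M > 0 \<and> (\<forall>x::int. \<exists>k\<in>{x..<x + int M}. coprime k (int M))"
  proof (intro conjI allI)
    fix x :: int
    let ?k = "x + ((1 - x) mod int M)"
    have "?k \<in> {x..<x + int M}" using assms by auto
    moreover have "?k mod int M = 1 mod int M" by (simp add: mod_add_right_eq)
    then have "coprime ?k (int M)"
      by (metis coprime_1_left coprime_mod_left_iff assms of_nat_0_less_iff less_irrefl mod_by_0 gcd_red_int coprime_iff_gcd_eq_1)
    ultimately show "\<exists>k\<in>{x..<x + int M}. coprime k (int M)" by blast
  qed (use assms in auto)
  show ?thesis unfolding jacobsthal_def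
    by (rule LeastI[of _ M]) (rule ex)
qed


lemma prod_subset_le:
  fixes f :: "nat \<Rightarrow> real"
  assumes "finite A" "C \<subseteq> A" "\<forall>x\<in>A. 0 \<le> f x \<and> f x \<le> 1"
  shows "prod f A \<le> prod f C"
proof -
  have "prod f A = prod f (A - C) * prod f C"
    using prod.subset_diff[OF assms(2,1)] by simp
  moreover have "prod f (A - C) \<le> 1" using assms by (intro prod_le_1) auto
  moreover have "prod f C \<ge> 0" using assms by (intro prod_nonneg) auto
  moreover have "prod f (A - C) * prod f C \<le> 1 * prod f C"
    using calculation(2,3) by (rule mult_right_mono)
  ultimately show ?thesis by simp
qed

lemma arith1: fixes J q r R :: real assumes "r>0" "q > r" "\<not> R < J/r*q*(q-r)" shows "R/q + J \<le> R/(q-r)"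
proof -
  have D: "q - r > 0" "q > 0" using assms by auto
  have h1: "J*q*(q-r) \<le> R*r" using assms(3) assms(1) by (simp add: not_less divide_le_eq mult.commute mult.left_commute)
  have Rq: "R/q*q = R" using D by simp
  have gen: "\<And>t. (t + J) * (q - r) * q = (t*q)*(q-r) + J*q*(q-r)" by (simp add: algebra_simps)
  have "(R/q + J) * (q - r) * q = (R/q*q)*(q-r) + J*q*(q-r)" by (rule gen)
  also have "\<dots> = R*(q-r) + J*q*(q-r)" using Rq by simp
  also have "\<dots> \<le> R*(q-r) + R*r" using h1 by simp
  also have "\<dots> = R * q" by (simp add: algebra_simps)
  finally have "(R/q + J) * (q - r) \<le> R" using D by simp
  then show ?thesis using D by (simp add: le_divide_eq)
qed
lemma arith2: fixes k q r R :: real assumes "q>r" "k \<le> R/(q-r)" shows "k*(q-r) \<le> R"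
  using assms by (simp add: le_divide_eq)
lemma arith3: fixes k q R :: real assumes "q>0" "k > R/q" shows "k*q > R"
  using assms by (simp add: divide_less_eq)
lemma arith4: fixes k q r P PI :: real assumes "q>0" shows "k*P*q*(PI*(1-r/q)) = k*(q-r)*(P*PI)"
proof -
  have "q*(1-r/q) = q - r" using assms by (simp add: right_diff_distrib)
  then show ?thesis by (metis mult.commute mult.left_commute)
qed

theorem lemma3p5:
  fixes r n :: nat
  assumes "r > 0" and "n \<in> F r"
  shows "real (R n) < real (J r) / real r * real (Q1 r n) * (real (Q1 r n) - real r)"
proof (rule ccontr)
  assume neg: "\<not> ?thesis"
  have nB: "n \<in> B r" and nF: "\<forall>m\<in>B r. m > n \<longrightarrow> S r n < S r m" using assms(2) unfolding F_def by auto
  then have n0: "n > 0" and Sn: "S r n > 0" unfolding B_def by auto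
  have pn: "\<forall>p\<in>prime_factors n. r < p" using S_pos_iff[OF n0] Sn by blast
  define q where "q = Q1 r n"
  obtain p0 :: nat where p0: "prime p0" "p0 > r + n" using bigger_prime by blast
  have "\<not> p0 dvd n" using p0 n0 by (auto dest: dvd_imp_le)
  then have "prime p0 \<and> p0 > r \<and> \<not> p0 dvd n" using p0 by auto
  then have qq: "prime q \<and> q > r \<and> \<not> q dvd n" unfolding q_def Q1_def by (rule LeastI)
  then have qpr: "prime q" and qr: "q > r" and qn: "\<not> q dvd n" by auto
  define P where "P = (\<Prod>p\<in>prime_factors n. p)"
  have P0: "P > 0" unfolding P_def by (rule prod_pos) (meson in_prime_factors_imp_prime prime_gt_0_nat)
  have Pdvd: "P dvd n" unfolding P_def
  proof -
    have "(\<Prod>p\<in>prime_factors n. p) dvd (\<Prod>p\<in>prime_factors n. p ^ multiplicity p n)"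
      by (rule prod_dvd_prod) (auto simp: prime_factors_multiplicity)
    also have "\<dots> = n" using prod_prime_factors[of n] n0 by simp
    finally show "(\<Prod>p\<in>prime_factors n. p) dvd n" .
  qed
  define R0 where "R0 = R n"
  have nRP: "n = R0 * P" unfolding R0_def R_def P_def[symmetric] using Pdvd by simp
  have pfP: "prime_factors P = prime_factors n"
  proof (intro set_eqI iffI)
    fix p assume "p \<in> prime_factors P"
    then show "p \<in> prime_factors n" using Pdvd n0 P0
      by (auto simp: in_prime_factors_iff intro: dvd_trans)
  next
    fix p assume h: "p \<in> prime_factors n"
    then have "p dvd P" unfolding P_def by (intro dvd_prodI) auto
    then show "p \<in> prime_factors P" using h P0 by (auto simp: in_prime_factors_iff)
  qed
  define PI where "PI = (\<Prod>p\<in>prime_factors n. 1 - real r / real p)"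
  have Pi0: "PI > 0" unfolding PI_def
  proof (intro prod_pos)
    fix p assume "p \<in> prime_factors n"
    then have "r < p" using pn by blast
    then have "real r / real p < 1" by (simp add: divide_less_eq_1)
    then show "0 < 1 - real r / real p" by linarith
  qed
  define X where "X = real P * PI"
  have X0: "X > 0" unfolding X_def using P0 Pi0 by simp
  have Snr: "real_of_int (S r n) = real R0 * X"
    using S_real[OF n0 pn] unfolding X_def PI_def[symmetric] by (subst (asm) nRP) simp
  define M where "M = primorial r"
  have M0: "M > 0" unfolding M_def primorial_def by (rule prod_pos) (auto simp: prime_gt_0_nat)
  define JJ where "JJ = J r"
  have JJ: "\<forall>x::int. \<exists>k\<in>{x..<x + int JJ}. coprime k (int M)"
    using jac[OF M0] unfolding JJ_def J_def M_def by blast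
  have qmr: "real q - real r > 0" using qr by simp
  have q0: "real q > 0" using qr by simp
  define a where "a = real R0 / real q"
  have a0: "a \<ge> 0" unfolding a_def by simp
  define x where "x = \<lfloor>a\<rfloor> + 1"
  obtain k where k: "k \<in> {x..<x + int JJ}" and kc: "coprime k (int M)" using JJ by blast
  have kx1: "\<lfloor>a\<rfloor> + 1 \<le> k" and kx2: "k < \<lfloor>a\<rfloor> + 1 + int JJ" using k unfolding x_def by auto
  have fl1: "real_of_int \<lfloor>a\<rfloor> \<le> a" "a < real_of_int \<lfloor>a\<rfloor> + 1" by linarith+
  have kx1': "real_of_int \<lfloor>a\<rfloor> + 1 \<le> real_of_int k" using kx1 by linarith
  have kx2': "real_of_int k \<le> real_of_int \<lfloor>a\<rfloor> + real JJ" using kx2 by linarith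
  have ka: "real_of_int k > a" using kx1' fl1 by linarith
  have k1: "k \<ge> 1" using kx1 a0 by linarith
  have kb: "real_of_int k \<le> a + real JJ" using kx2' fl1 by linarith
  have "a + real JJ \<le> real R0 / (real q - real r)"
    unfolding a_def by (rule arith1) (use assms(1) qr neg in \<open>auto simp: JJ_def q_def R0_def\<close>)
  with kb have kup: "real_of_int k \<le> real R0 / (real q - real r)" by linarith
  define kn where "kn = nat k"
  have knk: "real kn = real_of_int k" unfolding kn_def using k1 by simp
  have kn0: "kn > 0" unfolding kn_def using k1 by simp
  have kup': "real kn * (real q - real r) \<le> real R0" using arith2[of "real r" "real q" "real kn" "real R0"] kup qr knk by simp
  have klow: "real kn * real q > real R0" using arith3[of "real q" "real R0" "real kn"] ka q0 knk unfolding a_def by simp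
  define m where "m = kn * P * q"
  have m0: "m > 0" unfolding m_def using kn0 P0 qr by simp
  have mn: "m > n"
  proof -
    have "real R0 * real P < real kn * real q * real P" using klow P0 by simp
    then have "R0 * P < kn * q * P" by (metis of_nat_less_iff of_nat_mult)
    then show ?thesis unfolding m_def nRP by (simp add: ac_simps)
  qed
  have pfm: "prime_factors m = prime_factors kn \<union> prime_factors n \<union> {q}"
  proof -
    have a1: "kn * P \<noteq> 0" "q \<noteq> 0" "kn \<noteq> 0" "P \<noteq> 0" using kn0 P0 qr by auto
    have "prime_factors m = prime_factors (kn * P) \<union> prime_factors q"
      unfolding m_def by (rule prime_factors_product[OF a1(1,2)])
    also have "prime_factors (kn * P) = prime_factors kn \<union> prime_factors P"
      by (rule prime_factors_product[OF a1(3,4)])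
    also have "prime_factors q = {q}" using qpr by (rule prime_prime_factors)
    finally show ?thesis using pfP by simp
  qed
  have pkn: "\<forall>p\<in>prime_factors kn. r < p"
  proof
    fix p assume h: "p \<in> prime_factors kn"
    show "r < p"
    proof (rule ccontr)
      assume "\<not> r < p"
      then have "p \<le> r" by simp
      have pp: "prime p" "p dvd kn" using h by auto
      have "p dvd M" unfolding M_def primorial_def
        using pp \<open>p \<le> r\<close> by (intro dvd_prodI) auto
      then have "int p dvd int M" by simp
      moreover have "int p dvd k"
      proof -
        have "int p dvd int kn" using pp(2) by simp
        moreover have "int kn = k" unfolding kn_def using k1 by simp
        ultimately show ?thesis by simp
      qed
      ultimately have "is_unit (int p)" using coprime_common_divisor[OF kc] by blast
      then have "p = 1" by simp
      then show False using pp(1) by simp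
    qed
  qed
  have pm: "\<forall>p\<in>prime_factors m. r < p" using pfm pkn pn qr by auto
  have mB: "m \<in> B r" unfolding B_def using m0 S_pos_iff[OF m0] pm by auto
  have "real_of_int (S r m) = real m * (\<Prod>p\<in>prime_factors m. 1 - real r / real p)"
    by (rule S_real[OF m0 pm])
  also have "\<dots> \<le> real m * (\<Prod>p\<in>prime_factors n \<union> {q}. 1 - real r / real p)"
  proof (rule mult_left_mono)
    show "(\<Prod>p\<in>prime_factors m. 1 - real r / real p) \<le> (\<Prod>p\<in>prime_factors n \<union> {q}. 1 - real r / real p)"
    proof (rule prod_subset_le)
      show "finite (prime_factors m)" by simp
      show "prime_factors n \<union> {q} \<subseteq> prime_factors m" using pfm by blast
      show "\<forall>x\<in>prime_factors m. 0 \<le> 1 - real r / real x \<and> 1 - real r / real x \<le> 1"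
      proof
        fix x assume "x \<in> prime_factors m"
        then have "r < x" using pm by blast
        then have "real r / real x \<le> 1" by (simp add: divide_le_eq_1)
        moreover have "real r / real x \<ge> 0" by simp
        ultimately show "0 \<le> 1 - real r / real x \<and> 1 - real r / real x \<le> 1" by linarith
      qed
    qed
  qed simp
  also have "real m * (\<Prod>p\<in>prime_factors n \<union> {q}. 1 - real r / real p) = real m * (PI * (1 - real r / real q))"
  proof -
    have "q \<notin> prime_factors n" using qn by auto
    then show ?thesis unfolding PI_def by (simp add: mult.commute)
  qed
  also have "\<dots> = real kn * (real q - real r) * X"
    unfolding m_def X_def using arith4[OF q0, of "real kn" "real P" PI "real r"] by simp
  also have "\<dots> \<le> real R0 * X" using kup' X0 by (intro mult_right_mono) auto
  also have "\<dots> = real_of_int (S r n)" using Snr by simp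
  finally have "S r m \<le> S r n" by linarith
  moreover have "S r n < S r m" using nF mB mn by blast
  ultimately show False by simp
qed

end
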